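(* Let $q_1,\dots,q_n,q,p\in F(V)$. Then: (1) if $q_1,\dots,q_n\vdash_{\L^*}q$, then $q_1,\dots,q_n\vdash_{\mathrm{sq}\L^*}(p\to p)\to q$; (2) if $q$ is regular, then $(p\to p)\to q\vdash_{\mathrm{sq}\L^*}q$.
   Context: Let $V$ be a set of propositional variables and $F(V)$ the set of formulas built from $V$ and the constant $1$ using $\to$ and $\neg$. Abbreviations: $p^+:=(p\to 1)\to 1$, $p^-:=(p\to\neg 1)\to\neg 1$ (binding more tightly than $\neg$), $p\vee q:=((p^+\to q^+)^+\to(\neg p)^-)\to((q^-\to p^-)^-\to p^-)$; an axiom "$p\leftrightarrow q$" stands for the two axioms $p\to q$ and $q\to p$. A formula is regular if it contains an occurrence of $\to$ or of $1$. The logic $\L^*$ has axiom schemas: (P1) $(p\to q)\leftrightarrow(\neg q\to\neg p)$; (P2) $p\leftrightarrow((q\to q)\to p)$; (P3) $\neg(p\to q)\leftrightarrow(q\to p)$; (P4) $p\to 1$; (P5) $1\leftrightarrow((1\to p)\to 1)$; (P6) $((p\to 1)\to((q\to 1)\to r))\to((q\to 1)\to((p\to 1)\to r))$; (P7) $(p\to q)\leftrightarrow((q^+\to p^-)\to(p^+\to q^-))$; (P8) $(p\to(\neg p\to q))^+\leftrightarrow(p^+\to(\neg p^+\to q^+))$; (P9) $(p\to(q\vee r))\leftrightarrow((p\to r)\vee(p\to q))$; (P10) $(p\vee(q\vee r))\leftrightarrow((p\vee q)\vee r)$; and rules (R1) from $p$ and $p\to q$ infer $q$; (R2) from $p\to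 q$ and $r\to t$ infer $(q\to r)\to(p\to t)$; (R3) from $p$ infer $p^-$. The logic $\mathrm{sq}\L^*$ has axiom schemas (Q1) $(p\to q)\leftrightarrow(\neg q\to\neg p)$; (Q2) $1\leftrightarrow((1\to p)\to 1)$; (Q3) $p\leftrightarrow((q\to q)\to p)$; (Q4) $(p\to q)\leftrightarrow((q^+\to p^-)\to(p^+\to q^-))$; (Q5) $\neg(p\to q)\leftrightarrow(q\to p)$; (Q6) $(p\to(\neg p\to q))^+\leftrightarrow(p^+\to(\neg p^+\to q^+))$; (Q7) $(p\to(q\vee r))\leftrightarrow((p\to r)\vee(p\to q))$; (Q8) $(p\vee(q\vee r))\leftrightarrow((p\vee q)\vee r)$; (Q9) $((p\to 1)\to((q\to 1)\to r))\to((q\to 1)\to((p\to 1)\to r))$; (Q10) $p\to 1$; and rules: (qMP) from $(r\to r)\to p$ and $(r\to r)\to(p\to q)$ infer $(r\to r)\to q$; (Reg) from $p$ infer $(r\to r)\to p$; (AReg1) from $(r\to r)\to(p\to q)$ infer $p\to q$; (AReg2) from $(r\to r)\to\neg(p\to q)$ infer $\neg(p\to q)$; (AReg3) from $(r\to r)\to\neg 1$ infer $\neg 1$; (AReg4) from $(r\to r)\to 1$ infer $1$; (Inv1) from $p$ infer $\neg\neg p$; (Inv2) from $\neg\neg p$ infer $p$; (Flat) from $p$ and $\neg 1$ infer $\neg p$; (R2$'$) from $p\to q$ and $r\to t$ infer $(q\to r)\to(p\to t)$; (R3$'$) from $(r\to r)\to p$ infer $p^-$. For a logic $L\in\{\L^*,\mathrm{sq}\L^*\}$,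 $q_1,\dots,q_n\vdash_L q$ means there is a finite sequence of formulas ending with $q$ in which each member is an axiom instance of $L$, one of the $q_i$, or follows from earlier members by a rule of $L$. *)

theory Defs
  imports Main
begin

datatype 'v fm = Var 'v | One | Imp "'v fm" "'v fm" | Neg "'v fm"

definition Pplus :: "'v fm \<Rightarrow> 'v fm" where
  "Pplus p = Imp (Imp p One) One"

definition Pminus :: "'v fm \<Rightarrow> 'v fm" where
  "Pminus p = Imp (Imp p (Neg One)) (Neg One)"

definition Disj :: "'v fm \<Rightarrow> 'v fm \<Rightarrow> 'v fm" where
  "Disj p q = Imp (Imp (Pplus (Imp (Pplus p) (Pplus q))) (Pminus (Neg p)))
                  (Imp (Pminus (Imp (Pminus q) (Pminus p))) (Pminus p))"

fun regular :: "'v fm \<Rightarrow> bool" where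
  "regular (Var v) = False"
| "regular One = True"
| "regular (Imp p q) = True"
| "regular (Neg p) = regular p"

(* "p \<leftrightarrow> q" stands for the two axioms p \<rightarrow> q and q \<rightarrow> p *)
definition Iff :: "'v fm \<Rightarrow> 'v fm \<Rightarrow> 'v fm set" where
  "Iff p q = {Imp p q, Imp q p}"

inductive axL :: "'v fm \<Rightarrow> bool" where
  P1: "a \<in> Iff (Imp p q) (Imp (Neg q) (Neg p)) \<Longrightarrow> axL a"
| P2: "a \<in> Iff p (Imp (Imp q q) p) \<Longrightarrow> axL a"
| P3: "a \<in> Iff (Neg (Imp p q)) (Imp q p) \<Longrightarrow> axL a"
| P4: "axL (Imp p One)"
| P5: "a \<in> Iff One (Imp (Imp One p) One) \<Longrightarrow> axL a"
| P6: "axL (Imp (Imp (Imp p One) (Imp (Imp q One) r)) (Imp (Imp q One) (Imp (Imp p One) r)))"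
| P7: "a \<in> Iff (Imp p q) (Imp (Imp (Pplus q) (Pminus p)) (Imp (Pplus p) (Pminus q))) \<Longrightarrow> axL a"
| P8: "a \<in> Iff (Pplus (Imp p (Imp (Neg p) q))) (Imp (Pplus p) (Imp (Neg (Pplus p)) (Pplus q))) \<Longrightarrow> axL a"
| P9: "a \<in> Iff (Imp p (Disj q r)) (Disj (Imp p r) (Imp p q)) \<Longrightarrow> axL a"
| P10: "a \<in> Iff (Disj p (Disj q r)) (Disj (Disj p q) r) \<Longrightarrow> axL a"

inductive derL :: "'v fm set \<Rightarrow> 'v fm \<Rightarrow> bool" where
  ax: "axL a \<Longrightarrow> derL H a"
| hyp: "a \<in> H \<Longrightarrow> derL H a"
| R1: "derL H p \<Longrightarrow> derL H (Imp p q) \<Longrightarrow> derL H q"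
| R2: "derL H (Imp p q) \<Longrightarrow> derL H (Imp r t) \<Longrightarrow> derL H (Imp (Imp q r) (Imp p t))"
| R3: "derL H p \<Longrightarrow> derL H (Pminus p)"

inductive axSQ :: "'v fm \<Rightarrow> bool" where
  Q1: "a \<in> Iff (Imp p q) (Imp (Neg q) (Neg p)) \<Longrightarrow> axSQ a"
| Q2: "a \<in> Iff One (Imp (Imp One p) One) \<Longrightarrow> axSQ a"
| Q3: "a \<in> Iff p (Imp (Imp q q) p) \<Longrightarrow> axSQ a"
| Q4: "a \<in> Iff (Imp p q) (Imp (Imp (Pplus q) (Pminus p)) (Imp (Pplus p) (Pminus q))) \<Longrightarrow> axSQ a"
| Q5: "a \<in> Iff (Neg (Imp p q)) (Imp q p) \<Longrightarrow> axSQ a"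
| Q6: "a \<in> Iff (Pplus (Imp p (Imp (Neg p) q))) (Imp (Pplus p) (Imp (Neg (Pplus p)) (Pplus q))) \<Longrightarrow> axSQ a"
| Q7: "a \<in> Iff (Imp p (Disj q r)) (Disj (Imp p r) (Imp p q)) \<Longrightarrow> axSQ a"
| Q8: "a \<in> Iff (Disj p (Disj q r)) (Disj (Disj p q) r) \<Longrightarrow> axSQ a"
| Q9: "axSQ (Imp (Imp (Imp p One) (Imp (Imp q One) r)) (Imp (Imp q One) (Imp (Imp p One) r)))"
| Q10: "axSQ (Imp p One)"

inductive derSQ :: "'v fm set \<Rightarrow> 'v fm \<Rightarrow> bool" where
  ax: "axSQ a \<Longrightarrow> derSQ H a"
| hyp: "a \<in> H \<Longrightarrow> derSQ H a"
| qMP: "derSQ H (Imp (Imp r r) p) \<Longrightarrow> derSQ H (Imp (Imp r r) (Imp p q)) \<Longrightarrow> derSQ H (Imp (Imp r r) q)"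
| Reg: "derSQ H p \<Longrightarrow> derSQ H (Imp (Imp r r) p)"
| AReg1: "derSQ H (Imp (Imp r r) (Imp p q)) \<Longrightarrow> derSQ H (Imp p q)"
| AReg2: "derSQ H (Imp (Imp r r) (Neg (Imp p q))) \<Longrightarrow> derSQ H (Neg (Imp p q))"
| AReg3: "derSQ H (Imp (Imp r r) (Neg One)) \<Longrightarrow> derSQ H (Neg One)"
| AReg4: "derSQ H (Imp (Imp r r) One) \<Longrightarrow> derSQ H One"
| Inv1: "derSQ H p \<Longrightarrow> derSQ H (Neg (Neg p))"
| Inv2: "derSQ H (Neg (Neg p)) \<Longrightarrow> derSQ H p"
| Flat: "derSQ H p \<Longrightarrow> derSQ H (Neg One) \<Longrightarrow> derSQ H (Neg p)"
| R2': "derSQ H (Imp p q) \<Longrightarrow> derSQ H (Imp r t) \<Longrightarrow> derSQ H (Imp (Imp q r) (Imp p t))"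
| R3': "derSQ H (Imp (Imp r r) p) \<Longrightarrow> derSQ H (Pminus p)"

end

theory Submission
  imports Defs
begin

lemma axL_axSQ: "axL a \<Longrightarrow> axSQ a"
  by (induction rule: axL.induct) (auto intro: axSQ.intros)

lemma part1: "derL H q \<Longrightarrow> derSQ H (Imp (Imp p p) q)"
proof (induction rule: derL.induct)
  case (ax a H) then show ?case by (auto intro: derSQ.intros axL_axSQ)
next
  case (hyp a H) then show ?case by (auto intro: derSQ.intros)
next
  case (R1 H p' q') then show ?case by (auto intro: derSQ.qMP)
next
  case (R2 H a b c d) then show ?case by (meson derSQ.AReg1 derSQ.R2' derSQ.Reg)
next
  case (R3 H x) then show ?case by (meson derSQ.R3' derSQ.Reg)
qed

lemma ctxmp: "derSQ H (Imp (Imp r r) A) \<Longrightarrow> derSQ H (Imp A B) \<Longrightarrow> derSQ H (Imp (Imp r r) B)"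
  by (meson derSQ.qMP derSQ.Reg)

lemma contra: "derSQ H (Imp A B) \<Longrightarrow> derSQ H (Imp (Neg B) (Neg A))"
proof -
  assume h: "derSQ H (Imp A B)"
  have "derSQ H (Imp (Imp A B) (Imp (Neg B) (Neg A)))"
    by (rule derSQ.ax, rule axSQ.Q1[of _ A B]) (simp add: Iff_def)
  then have "derSQ H (Imp (Imp One One) (Imp (Neg B) (Neg A)))"
    using h by (meson derSQ.qMP derSQ.Reg)
  then show ?thesis by (rule derSQ.AReg1)
qed

abbreviation negs :: "nat \<Rightarrow> 'v fm \<Rightarrow> 'v fm" where "negs n x \<equiv> (Neg ^^ n) x"

lemma EF: "derSQ H (Imp (negs (Suc k) (Imp b a)) (negs k (Imp a b)))
   \<and> derSQ H (Imp (negs k (Imp a b)) (negs (Suc k) (Imp b a)))"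
proof (induction k arbitrary: a b)
  case 0
  show ?case
    by (auto intro!: derSQ.ax axSQ.Q5[of _ b a] simp: Iff_def)
next
  case (Suc k)
  then show ?case using contra by fastforce
qed

lemma G: "derSQ H (Imp (negs (Suc (Suc (2*k))) One) (negs (2*k) One))"
proof (induction k)
  case 0
  then show ?case by (auto intro!: derSQ.ax axSQ.Q10)
next
  case (Suc k)
  then show ?case using contra[OF contra[OF Suc]] by simp
qed

lemma AB: "derSQ H (Imp (negs (Suc (2*i)) One) (negs (Suc (2*i)) (Imp (Imp One p) One)))
  \<and> derSQ H (Imp (negs (Suc (2*i)) (Imp (Imp One p) One)) (negs (Suc (2*i)) One))"
proof (induction i)
  case 0
  have a: "derSQ H (Imp (Imp (Imp One p) One) One)"
    by (rule derSQ.ax, rule axSQ.Q2[of _ p]) (simp add: Iff_def)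
  have b: "derSQ H (Imp One (Imp (Imp One p) One))"
    by (rule derSQ.ax, rule axSQ.Q2[of _ p]) (simp add: Iff_def)
  show ?case using contra[OF a] contra[OF b] by simp
next
  case (Suc i)
  then show ?case using contra[OF contra[of H]] by simp
qed

lemma main: "x = One \<or> (\<exists>a b. x = Imp a b) \<Longrightarrow>
   derSQ H (Imp (Imp r r) (negs n x)) \<Longrightarrow> derSQ H (negs n x)"
proof (induction n rule: nat_less_induct)
  case (1 n)
  note IH = 1(1) and xf = 1(2) and hh = 1(3)
  show ?case
  proof (cases n)
    case 0
    then have h0: "derSQ H (Imp (Imp r r) x)" using hh by simp
    from xf show ?thesis
    proof
      assume xo: "x = One"
      then have "derSQ H (Imp (Imp r r) One)" using h0 by simp
      from derSQ.AReg4[OF this] show ?thesis using xo \<open>n = 0\<close> by simp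
    next
      assume "\<exists>a b. x = Imp a b"
      then obtain a b where "x = Imp a b" by blast
      then have "derSQ H (Imp (Imp r r) (Imp a b))" using h0 by simp
      from derSQ.AReg1[OF this] show ?thesis using \<open>x = Imp a b\<close> \<open>n = 0\<close> by simp
    qed
  next
    case (Suc m)
    show ?thesis
    proof (cases m)
      case 0
      then have h0: "derSQ H (Imp (Imp r r) (Neg x))" using hh Suc by simp
      from xf show ?thesis
      proof
        assume xo: "x = One"
        then have "derSQ H (Imp (Imp r r) (Neg One))" using h0 by simp
        from derSQ.AReg3[OF this] show ?thesis using xo \<open>n = Suc m\<close> \<open>m = 0\<close> by simp
      next
        assume "\<exists>a b. x = Imp a b"
        then obtain a b where "x = Imp a b" by blast
        then have "derSQ H (Imp (Imp r r) (Neg (Imp a b)))" using h0 by simp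
        from derSQ.AReg2[OF this] show ?thesis using \<open>x = Imp a b\<close> \<open>n = Suc m\<close> \<open>m = 0\<close> by simp
      qed
    next
      case (Suc k)
      have nk: "n = Suc (Suc k)" using \<open>n = Suc m\<close> Suc by simp
      have h3: "derSQ H (Imp (Imp r r) (negs (Suc (Suc k)) x))" using hh nk by simp
      have "derSQ H (Imp (Imp r r) (negs k x))"
      proof (cases "x = One")
        case True
        have "even k \<or> odd k" by simp
        then show ?thesis
        proof
          assume "even k"
          then obtain j where kj: "k = 2*j" by (elim evenE) simp
          have "derSQ H (Imp (Imp r r) (negs (Suc (Suc (2*j))) One))" using h3 True kj by simp
          from ctxmp[OF this G[of H j]] show ?thesis using kj True by simp
        next
          assume "odd k"
          then obtain j where k: "k = Suc (2*j)" by (elim oddE) simp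
          have h5: "derSQ H (Imp (Imp r r) (negs (Suc (Suc (Suc (2*j)))) One))" using h3 True k by simp
          have s1: "derSQ H (Imp (negs (Suc (Suc (Suc (2*j)))) One) (negs (Suc (Suc (Suc (2*j)))) (Imp (Imp One One) One)))"
            using AB[of H "Suc j" One] by simp
          have s2: "derSQ H (Imp (negs (Suc (Suc (Suc (2*j)))) (Imp (Imp One One) One)) (negs (Suc (Suc (2*j))) (Imp One (Imp One One))))"
            using EF[of H "Suc (Suc (2*j))" "Imp One One" One] by blast
          have s3: "derSQ H (Imp (negs (Suc (Suc (2*j))) (Imp One (Imp One One))) (negs (Suc (2*j)) (Imp (Imp One One) One)))"
            using EF[of H "Suc (2*j)" One "Imp One One"] by blast
          have s4: "derSQ H (Imp (negs (Suc (2*j)) (Imp (Imp One One) One)) (negs (Suc (2*j)) One))"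
            using AB[of H j One] by blast
          have "derSQ H (Imp (Imp r r) (negs (Suc (2*j)) One))"
            by (rule ctxmp[OF ctxmp[OF ctxmp[OF ctxmp[OF h5 s1] s2] s3] s4])
          then show ?thesis using True k by simp
        qed
      next
        case False
        then obtain a b where x: "x = Imp a b" using xf by blast
        have h4: "derSQ H (Imp (Imp r r) (negs (Suc (Suc k)) (Imp a b)))" using h3 x by simp
        have e1: "derSQ H (Imp (negs (Suc (Suc k)) (Imp a b)) (negs (Suc k) (Imp b a)))"
          using EF[of H "Suc k" a b] by blast
        have s1: "derSQ H (Imp (Imp r r) (negs (Suc k) (Imp b a)))"
          by (rule ctxmp[OF h4 e1])
        have e2: "derSQ H (Imp (negs (Suc k) (Imp b a)) (negs k (Imp a b)))"
          using EF[of H k b a] by blast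
        show ?thesis using ctxmp[OF s1 e2] x by simp
      qed
      moreover have "k < n" using nk by simp
      ultimately have "derSQ H (negs k x)" using IH xf by blast
      then show ?thesis using nk by (simp add: derSQ.Inv1)
    qed
  qed
qed

lemma reg_negs: "regular q \<Longrightarrow> \<exists>n x. q = negs n x \<and> (x = One \<or> (\<exists>a b. x = Imp a b))"
proof (induction q)
  case (Var v) then show ?case by simp
next
  case One then show ?case by (intro exI[of _ 0] exI[of _ One]) simp
next
  case (Imp a b) then show ?case by (intro exI[of _ 0]) simp
next
  case (Neg q)
  then obtain n x where "q = negs n x" "x = One \<or> (\<exists>a b. x = Imp a b)" by auto
  then show ?case by (intro exI[of _ "Suc n"] exI[of _ x]) simp
qed

theorem lemma4p1:
  fixes qs :: "'v fm list" and q p :: "'v fm"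
  shows "(derL (set qs) q \<longrightarrow> derSQ (set qs) (Imp (Imp p p) q))
       \<and> (regular q \<longrightarrow> derSQ {Imp (Imp p p) q} q)"
proof
  show "derL (set qs) q \<longrightarrow> derSQ (set qs) (Imp (Imp p p) q)" using part1 by blast
  show "regular q \<longrightarrow> derSQ {Imp (Imp p p) q} q"
  proof
    assume "regular q"
    then obtain n x where q: "q = negs n x" "x = One \<or> (\<exists>a b. x = Imp a b)"
      using reg_negs by blast
    have "derSQ {Imp (Imp p p) q} (Imp (Imp p p) q)" by (rule derSQ.hyp) simp
    then show "derSQ {Imp (Imp p p) q} q" using main[OF q(2)] q(1) by simp
  qed
qed

end
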